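(* Let $\phi$ be an LTL formula in negation normal form that is in neXt Normal Form. If $A$ is a satisfying assignment of $\phi^p$, then there is a propositional assignment $A'$ for $\phi$ with $\phi\in A'$ such that $A'\cap\mathrm{atoms}(\phi)\subseteq A$. Conversely, if $A'$ is a propositional assignment for $\phi$ with $\phi\in A'$, then there is a satisfying assignment $A$ of $\phi^p$ such that $A'\cap\mathrm{atoms}(\phi)\subseteq A$.
   Context: $AP$ is a finite set of atoms, $L=\{a,\neg a: a\in AP\}$. LTL formulas in NNF: $\phi::= \mathit{tt}\mid \mathit{ff}\mid \ell \mid \phi\wedge\phi\mid\phi\vee\phi\mid \phi U\phi\mid \phi R\phi\mid X\phi$, $\ell\in L$. Propositional atoms: $\mathrm{atoms}(\phi)=\{\phi\}$ if $\phi$ is an atom, Next, Until or Release formula; $\mathrm{atoms}(\neg\psi)=\mathrm{atoms}(\psi)$; $\mathrm{atoms}(\phi_1\wedge\phi_2)=\mathrm{atoms}(\phi_1\vee\phi_2)=\mathrm{atoms}(\phi_1)\cup\mathrm{atoms}(\phi_2)$. $\phi$ is in XNF if $\mathrm{atoms}(\phi)$ contains no Until or Release formula. $\phi^p$ denotes $\phi$ viewed as a propositional formula whose propositional variables are the elements of $\mathrm{atoms}(\phi)$; a satisfying assignment $A$ of $\phi^p$ is identified with the set of variables in $\mathrm{atoms}(\phi)$ it makes true. The closure $cl(\phi)$ is the smallest set containing $\phi$, closed under immediate subformulas (operands of $\wedge,\vee,U,R,X,\neg$), and containing $X\psi$ for every Until or Release formula $\psi$ in it. A propositional assignment for $\phi$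 is a set $A'\subseteq cl(\phi)\cup L$ such that: for each $a\in AP$ exactly one of $a,\neg a$ is in $A'$; $(\theta_1\wedge\theta_2)\in A'\Rightarrow\theta_1,\theta_2\in A'$; $(\theta_1\vee\theta_2)\in A'\Rightarrow\theta_1\in A'$ or $\theta_2\in A'$; $(\theta_1U\theta_2)\in A'\Rightarrow\theta_2\in A'$ or both $\theta_1\in A'$ and $X(\theta_1U\theta_2)\in A'$; $(\theta_1R\theta_2)\in A'\Rightarrow\theta_2\in A'$ and ($\theta_1\in A'$ or $X(\theta_1R\theta_2)\in A'$).
   Formalization: A propositional assignment for $\phi$ has one further defining clause: ff is never an element of $A'$. The statement above fails without it. *)

theory Defs
  imports Main
begin

text \<open>LTL formulas in negation normal form over atomic propositions of the
  finite type 'a (playing the role of AP).  Pos a is the literal a, Neg a is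
  the literal not a.\<close>

datatype 'a ltl =
    TT
  | FF
  | Pos 'a
  | Neg 'a
  | And "'a ltl" "'a ltl"
  | Or "'a ltl" "'a ltl"
  | Until "'a ltl" "'a ltl"
  | Release "'a ltl" "'a ltl"
  | Next "'a ltl"

definition lits :: "'a ltl set" where
  "lits = {Pos a | a. True} \<union> {Neg a | a. True}"

fun atoms :: "'a ltl \<Rightarrow> 'a ltl set" where
  "atoms TT = {}"
| "atoms FF = {}"
| "atoms (Pos a) = {Pos a}"
| "atoms (Neg a) = {Pos a}"
| "atoms (And f g) = atoms f \<union> atoms g"
| "atoms (Or f g) = atoms f \<union> atoms g"
| "atoms (Until f g) = {Until f g}"
| "atoms (Release f g) = {Release f g}"
| "atoms (Next f) = {Next f}"

definition is_until_or_release :: "'a ltl \<Rightarrow> bool" where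
  "is_until_or_release f \<longleftrightarrow> (\<exists>g h. f = Until g h \<or> f = Release g h)"

definition xnf :: "'a ltl \<Rightarrow> bool" where
  "xnf f \<longleftrightarrow> (\<forall>g\<in>atoms f. \<not> is_until_or_release g)"

text \<open>Truth of the propositional formula f^p under the assignment A
  (the set of propositional variables, i.e. elements of atoms f, made true).\<close>
fun prop_sat :: "'a ltl set \<Rightarrow> 'a ltl \<Rightarrow> bool" where
  "prop_sat A TT = True"
| "prop_sat A FF = False"
| "prop_sat A (Pos a) = (Pos a \<in> A)"
| "prop_sat A (Neg a) = (Pos a \<notin> A)"
| "prop_sat A (And f g) = (prop_sat A f \<and> prop_sat A g)"
| "prop_sat A (Or f g) = (prop_sat A f \<or> prop_sat A g)"
| "prop_sat A (Until f g) = (Until f g \<in> A)"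
| "prop_sat A (Release f g) = (Release f g \<in> A)"
| "prop_sat A (Next f) = (Next f \<in> A)"

definition sat_assignment :: "'a ltl \<Rightarrow> 'a ltl set \<Rightarrow> bool" where
  "sat_assignment f A \<longleftrightarrow> A \<subseteq> atoms f \<and> prop_sat A f"

inductive_set cl :: "'a ltl \<Rightarrow> 'a ltl set" for f :: "'a ltl" where
  self: "f \<in> cl f"
| and1: "And g h \<in> cl f \<Longrightarrow> g \<in> cl f"
| and2: "And g h \<in> cl f \<Longrightarrow> h \<in> cl f"
| or1: "Or g h \<in> cl f \<Longrightarrow> g \<in> cl f"
| or2: "Or g h \<in> cl f \<Longrightarrow> h \<in> cl f"
| until1: "Until g h \<in> cl f \<Longrightarrow> g \<in> cl f"
| until2: "Until g h \<in> cl f \<Longrightarrow> h \<in> cl f"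
| release1: "Release g h \<in> cl f \<Longrightarrow> g \<in> cl f"
| release2: "Release g h \<in> cl f \<Longrightarrow> h \<in> cl f"
| next1: "Next g \<in> cl f \<Longrightarrow> g \<in> cl f"
| untilX: "Until g h \<in> cl f \<Longrightarrow> Next (Until g h) \<in> cl f"
| releaseX: "Release g h \<in> cl f \<Longrightarrow> Next (Release g h) \<in> cl f"

text \<open>Propositional assignment for f.  Besides the conditions listed in the
  paper we require FF \<notin> A'.\<close>
definition prop_assignment :: "'a ltl \<Rightarrow> 'a ltl set \<Rightarrow> bool" where
  "prop_assignment f A' \<longleftrightarrow>
     A' \<subseteq> cl f \<union> lits \<and>
     FF \<notin> A' \<and>
     (\<forall>a. (Pos a \<in> A') \<noteq> (Neg a \<in> A')) \<and>
     (\<forall>g h. And g h \<in> A' \<longrightarrow> g \<in> A' \<and> h \<in> A') \<and>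
     (\<forall>g h. Or g h \<in> A' \<longrightarrow> g \<in> A' \<or> h \<in> A') \<and>
     (\<forall>g h. Until g h \<in> A' \<longrightarrow> h \<in> A' \<or> (g \<in> A' \<and> Next (Until g h) \<in> A')) \<and>
     (\<forall>g h. Release g h \<in> A' \<longrightarrow> h \<in> A' \<and> (g \<in> A' \<or> Next (Release g h) \<in> A'))"

end

theory Submission
  imports Defs
begin

lemma notlit: "And g h \<notin> lits" "Or g h \<notin> lits" "Until g h \<notin> lits"
  "Release g h \<notin> lits" "Next g \<notin> lits" "TT \<notin> lits" "FF \<notin> lits"
  by (auto simp: lits_def)

lemma pa_FF: "prop_assignment f A' \<Longrightarrow> FF \<notin> A'"
  unfolding prop_assignment_def by (elim conjE) assumption
lemma pa_lit: "prop_assignment f A' \<Longrightarrow> (Pos a \<in> A') \<noteq> (Neg a \<in> A')"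
  unfolding prop_assignment_def by (elim conjE) (erule allE)
lemma pa_and: "prop_assignment f A' \<Longrightarrow> And g h \<in> A' \<Longrightarrow> g \<in> A' \<and> h \<in> A'"
  unfolding prop_assignment_def by (elim conjE) (erule allE, erule allE, erule mp)
lemma pa_or: "prop_assignment f A' \<Longrightarrow> Or g h \<in> A' \<Longrightarrow> g \<in> A' \<or> h \<in> A'"
  unfolding prop_assignment_def by (elim conjE) (erule allE, erule allE, erule mp)

lemma dir2:
  assumes pa: "prop_assignment \<phi> A'"
  shows "atoms \<psi> \<subseteq> atoms \<phi> \<Longrightarrow> \<psi> \<in> A' \<Longrightarrow> prop_sat (A' \<inter> atoms \<phi>) \<psi>"
proof (induction \<psi>)
  case TT
  then show ?case by simp
next
  case FF
  then show ?case using pa_FF[OF pa] by blast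
next
  case (Pos a)
  then show ?case by simp
next
  case (Neg a)
  have "Pos a \<notin> A'" using pa_lit[OF pa, of a] Neg.prems(2) by blast
  then show ?case by simp
next
  case (And g h)
  have gh: "g \<in> A'" "h \<in> A'" using pa_and[OF pa] And.prems(2) by blast+
  have s: "atoms g \<subseteq> atoms \<phi>" "atoms h \<subseteq> atoms \<phi>" using And.prems(1) by simp_all
  have "prop_sat (A' \<inter> atoms \<phi>) g" using And.IH(1)[OF s(1) gh(1)] .
  moreover have "prop_sat (A' \<inter> atoms \<phi>) h" using And.IH(2)[OF s(2) gh(2)] .
  ultimately show ?case by simp
next
  case (Or g h)
  have s: "atoms g \<subseteq> atoms \<phi>" "atoms h \<subseteq> atoms \<phi>" using Or.prems(1) by simp_all
  have "g \<in> A' \<or> h \<in> A'" using pa_or[OF pa] Or.prems(2) by blast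
  then show ?case
  proof
    assume "g \<in> A'" then have "prop_sat (A' \<inter> atoms \<phi>) g" using Or.IH(1)[OF s(1)] by blast
    then show ?thesis by simp
  next
    assume "h \<in> A'" then have "prop_sat (A' \<inter> atoms \<phi>) h" using Or.IH(2)[OF s(2)] by blast
    then show ?thesis by simp
  qed
next
  case (Until g h)
  then show ?case by simp
next
  case (Release g h)
  then show ?case by simp
next
  case (Next g)
  then show ?case by simp
qed

lemma dir1:
  assumes x: "xnf \<phi>" and s: "sat_assignment \<phi> A"
  shows "prop_assignment \<phi> {\<psi> \<in> cl \<phi> \<union> lits. prop_sat A \<psi>}"
proof -
  define S where "S = {\<psi> \<in> cl \<phi> \<union> lits. prop_sat A \<psi>}"
  have A: "A \<subseteq> atoms \<phi>" using s by (simp add: sat_assignment_def)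
  have nU: "Until g h \<notin> A" "Release g h \<notin> A" for g h
    using A x by (auto simp: xnf_def is_until_or_release_def)
  have c1: "S \<subseteq> cl \<phi> \<union> lits" unfolding S_def by blast
  have c2: "FF \<notin> S" unfolding S_def by simp
  have c3: "\<forall>a. (Pos a \<in> S) \<noteq> (Neg a \<in> S)" unfolding S_def by (simp add: lits_def)
  have c4: "\<forall>g h. And g h \<in> S \<longrightarrow> g \<in> S \<and> h \<in> S"
  proof (intro allI impI)
    fix g h assume "And g h \<in> S"
    then have "And g h \<in> cl \<phi>" "prop_sat A g" "prop_sat A h" unfolding S_def using notlit by auto
    then have a: "And g h \<in> cl \<phi>" by simp
    have "g \<in> cl \<phi>" using a by (rule cl.and1)
    moreover have "h \<in> cl \<phi>" using a by (rule cl.and2)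
    ultimately have "g \<in> cl \<phi>" "h \<in> cl \<phi>" by simp_all
    then show "g \<in> S \<and> h \<in> S" unfolding S_def using \<open>prop_sat A g\<close> \<open>prop_sat A h\<close> by simp
  qed
  have c5: "\<forall>g h. Or g h \<in> S \<longrightarrow> g \<in> S \<or> h \<in> S"
  proof (intro allI impI)
    fix g h assume "Or g h \<in> S"
    then have "Or g h \<in> cl \<phi>" "prop_sat A g \<or> prop_sat A h" unfolding S_def using notlit by auto
    note this
    moreover have "g \<in> cl \<phi>" using \<open>Or g h \<in> cl \<phi>\<close> by (rule cl.or1)
    moreover have "h \<in> cl \<phi>" using \<open>Or g h \<in> cl \<phi>\<close> by (rule cl.or2)
    ultimately show "g \<in> S \<or> h \<in> S" unfolding S_def by auto
  qed
  have c6: "\<forall>g h. Until g h \<notin> S" unfolding S_def using nU by simp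
  have c7: "\<forall>g h. Release g h \<notin> S" unfolding S_def using nU by simp
  have "prop_assignment \<phi> S" unfolding prop_assignment_def
  proof (intro conjI)
    show "\<forall>g h. Until g h \<in> S \<longrightarrow> h \<in> S \<or> (g \<in> S \<and> Next (Until g h) \<in> S)"
      using c6 by blast
    show "\<forall>g h. Release g h \<in> S \<longrightarrow> h \<in> S \<and> (g \<in> S \<or> Next (Release g h) \<in> S)"
      using c7 by blast
  qed (fact c1 c2 c3 c4 c5)+
  then show ?thesis unfolding S_def .
qed

lemma atoms_sat: "\<chi> \<in> atoms \<phi>' \<Longrightarrow> prop_sat A \<chi> \<Longrightarrow> \<chi> \<in> A"
  by (induction \<phi>') auto

theorem theorem4:
  fixes \<phi> :: "('a::finite) ltl"
  assumes "xnf \<phi>"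
  shows "(\<forall>A. sat_assignment \<phi> A \<longrightarrow>
            (\<exists>A'. prop_assignment \<phi> A' \<and> \<phi> \<in> A' \<and> A' \<inter> atoms \<phi> \<subseteq> A))
       \<and> (\<forall>A'. prop_assignment \<phi> A' \<and> \<phi> \<in> A' \<longrightarrow>
            (\<exists>A. sat_assignment \<phi> A \<and> A' \<inter> atoms \<phi> \<subseteq> A))"
proof (intro conjI allI impI)
  fix A assume s: "sat_assignment \<phi> A"
  define S where "S = {\<psi> \<in> cl \<phi> \<union> lits. prop_sat A \<psi>}"
  have sub: "S \<inter> atoms \<phi> \<subseteq> A"
    unfolding S_def using atoms_sat by blast
  have p: "prop_assignment \<phi> S" unfolding S_def by (rule dir1[OF assms s])
  have "\<phi> \<in> cl \<phi>" by (rule cl.self)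
  then have "\<phi> \<in> S" unfolding S_def using s by (simp add: sat_assignment_def)
  then show "\<exists>A'. prop_assignment \<phi> A' \<and> \<phi> \<in> A' \<and> A' \<inter> atoms \<phi> \<subseteq> A"
    using p sub by blast
next
  fix A' assume h: "prop_assignment \<phi> A' \<and> \<phi> \<in> A'"
  have "prop_sat (A' \<inter> atoms \<phi>) \<phi>" using dir2[of \<phi> A' \<phi>] h by simp
  then have "sat_assignment \<phi> (A' \<inter> atoms \<phi>)" by (simp add: sat_assignment_def)
  then show "\<exists>A. sat_assignment \<phi> A \<and> A' \<inter> atoms \<phi> \<subseteq> A" by blast
qed

end
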